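(* Let $(\Lambda,\Pi,\perp,\mathrm{push})$ be a realizability lattice. For all $P,R\in\mathcal P_\bullet(\Pi)$ and $L\subseteq\Lambda$: $L\leadsto_\bullet R\subseteq P$ if and only if $R\subseteq P\ast_\bullet L$.
   Context: A realizability lattice consists of sets $\Lambda$ (terms), $\Pi$ (stacks), a relation $\perp\subseteq\Lambda\times\Pi$ (write $t\perp\pi$) and a map $\mathrm{push}:\Lambda\times\Pi\to\Pi$, written $t\cdot\pi$. For $L\subseteq\Lambda$, $L^\perp=\{\pi:\forall t\in L,\ t\perp\pi\}$; for $P\subseteq\Pi$, ${}^\perp P=\{t:\forall \pi\in P,\ t\perp\pi\}$; $\overline P=({}^\perp P)^\perp$; $\widehat P=\bigcup_{\pi\in P}\overline{\{\pi\}}$; $\mathcal P_\bullet(\Pi)=\{P\subseteq\Pi:\widehat P=P\}$. For $L\subseteq\Lambda$, $P\subseteq\Pi$: $L\leadsto P=\{t\cdot\pi:t\in L,\pi\in P\}$, $L\leadsto_\bullet P=\widehat{L\leadsto P}$, and $P\ast_\bullet L=\{\pi\in\Pi: t\cdot\pi'\in P\text{ for all }t\in L,\ \pi'\in\overline{\{\pi\}}\}$. *)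

theory Defs
  imports Main
begin

definition orthL :: "('l \<Rightarrow> 'p \<Rightarrow> bool) \<Rightarrow> 'l set \<Rightarrow> 'p set" where
  "orthL perp L = {\<pi>. \<forall>t\<in>L. perp t \<pi>}"

definition orthP :: "('l \<Rightarrow> 'p \<Rightarrow> bool) \<Rightarrow> 'p set \<Rightarrow> 'l set" where
  "orthP perp P = {t. \<forall>\<pi>\<in>P. perp t \<pi>}"

definition bclos :: "('l \<Rightarrow> 'p \<Rightarrow> bool) \<Rightarrow> 'p set \<Rightarrow> 'p set" where
  "bclos perp P = orthL perp (orthP perp P)"

definition hatc :: "('l \<Rightarrow> 'p \<Rightarrow> bool) \<Rightarrow> 'p set \<Rightarrow> 'p set" where
  "hatc perp P = (\<Union>\<pi>\<in>P. bclos perp {\<pi>})"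

definition Pbullet :: "('l \<Rightarrow> 'p \<Rightarrow> bool) \<Rightarrow> 'p set set" where
  "Pbullet perp = {P. hatc perp P = P}"

definition arrowset :: "('l \<Rightarrow> 'p \<Rightarrow> 'p) \<Rightarrow> 'l set \<Rightarrow> 'p set \<Rightarrow> 'p set" where
  "arrowset push L P = {push t \<pi> | t \<pi>. t \<in> L \<and> \<pi> \<in> P}"

definition arrow_bullet :: "('l \<Rightarrow> 'p \<Rightarrow> bool) \<Rightarrow> ('l \<Rightarrow> 'p \<Rightarrow> 'p) \<Rightarrow> 'l set \<Rightarrow> 'p set \<Rightarrow> 'p set" where
  "arrow_bullet perp push L P = hatc perp (arrowset push L P)"

definition star_bullet :: "('l \<Rightarrow> 'p \<Rightarrow> bool) \<Rightarrow> ('l \<Rightarrow> 'p \<Rightarrow> 'p) \<Rightarrow> 'p set \<Rightarrow> 'l set \<Rightarrow> 'p set" where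
  "star_bullet perp push P L = {\<pi>. \<forall>t\<in>L. \<forall>\<pi>'\<in>bclos perp {\<pi>}. push t \<pi>' \<in> P}"

end

theory Submission
  imports Defs
begin

lemma bclos_single: "bclos perp {\<pi>} = {x. \<forall>t. perp t \<pi> \<longrightarrow> perp t x}"
  by (auto simp: bclos_def orthL_def orthP_def)

theorem mainTheorem3:
  fixes perp :: "'l \<Rightarrow> 'p \<Rightarrow> bool" and push :: "'l \<Rightarrow> 'p \<Rightarrow> 'p"
    and P R :: "'p set" and L :: "'l set"
  assumes "P \<in> Pbullet perp" and "R \<in> Pbullet perp"
  shows "arrow_bullet perp push L R \<subseteq> P \<longleftrightarrow> R \<subseteq> star_bullet perp push P L"
proof -
  have P: "\<And>x y. y \<in> P \<Longrightarrow> (\<forall>t. perp t y \<longrightarrow> perp t x) \<Longrightarrow> x \<in> P"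
    using assms(1) unfolding Pbullet_def hatc_def bclos_single by blast
  have R: "\<And>x y. y \<in> R \<Longrightarrow> (\<forall>t. perp t y \<longrightarrow> perp t x) \<Longrightarrow> x \<in> R"
    using assms(2) unfolding Pbullet_def hatc_def bclos_single by blast
  show ?thesis
  proof
    assume h: "arrow_bullet perp push L R \<subseteq> P"
    show "R \<subseteq> star_bullet perp push P L"
    proof
      fix \<pi> assume "\<pi> \<in> R"
      { fix t \<pi>' assume "t \<in> L" "\<forall>s. perp s \<pi> \<longrightarrow> perp s \<pi>'"
        then have "\<pi>' \<in> R" using R \<open>\<pi> \<in> R\<close> by blast
        then have "push t \<pi>' \<in> arrow_bullet perp push L R"
          using \<open>t \<in> L\<close> unfolding arrow_bullet_def hatc_def arrowset_def bclos_single by blast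
        then have "push t \<pi>' \<in> P" using h by blast }
      then show "\<pi> \<in> star_bullet perp push P L"
        unfolding star_bullet_def bclos_single by blast
    qed
  next
    assume h: "R \<subseteq> star_bullet perp push P L"
    show "arrow_bullet perp push L R \<subseteq> P"
    proof
      fix x assume "x \<in> arrow_bullet perp push L R"
      then obtain t \<pi> where t: "t \<in> L" "\<pi> \<in> R" "\<forall>s. perp s (push t \<pi>) \<longrightarrow> perp s x"
        unfolding arrow_bullet_def hatc_def arrowset_def bclos_single by blast
      have "push t \<pi> \<in> P" using h t unfolding star_bullet_def bclos_single by blast
      then show "x \<in> P" using P t by blast
    qed
  qed
qed

end
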